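(* Let $r\in(0,1]^K$ and fix an action $a\in[K]$. Let $\theta_1\in\mathbb{R}^K$ and $\eta>0$, and define the sequence $\theta_{t+1} = \theta_t + \eta(\hat r_t - \hat b_t)$ where the sampled action is fixed to $a_t = a$ for all $t\ge1$, $\hat r_t(i) = \frac{\mathbb{I}\{a_t=i\}}{\pi_{\theta_t}(i)}r(i)$ and $\hat b_t(i) = \left(\frac{\mathbb{I}\{a_t=i\}}{\pi_{\theta_t}(i)}-1\right)\pi_{\theta_t}^\top r$ for $i\in[K]$. Then $1-\pi_{\theta_t}(a)\in\Omega(1/t)$, i.e. there is a constant $C>0$ with $1-\pi_{\theta_t}(a)\ge C/t$ for all sufficiently large $t$.
   Context: $\pi_\theta(i) = e^{\theta(i)}/\sum_{i'\in[K]}e^{\theta(i')}$ is the softmax policy on $[K]=\{1,\dots,K\}$, $K\ge2$. *)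

theory Defs
  imports "HOL-Analysis.Analysis"
begin

text \<open>Softmax policy on [K] = {1..K}; parameters are functions nat => real,
  only the values on {1..K} matter.\<close>
definition softmax :: "nat \<Rightarrow> (nat \<Rightarrow> real) \<Rightarrow> nat \<Rightarrow> real" where
  "softmax K \<theta> i = exp (\<theta> i) / (\<Sum>j\<in>{1..K}. exp (\<theta> j))"

definition rhat :: "nat \<Rightarrow> (nat \<Rightarrow> real) \<Rightarrow> nat \<Rightarrow> (nat \<Rightarrow> real) \<Rightarrow> nat \<Rightarrow> real" where
  "rhat K r a \<theta> i = (if a = i then 1 else 0) / softmax K \<theta> i * r i"

definition bhat :: "nat \<Rightarrow> (nat \<Rightarrow> real) \<Rightarrow> nat \<Rightarrow> (nat \<Rightarrow> real) \<Rightarrow> nat \<Rightarrow> real" where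
  "bhat K r a \<theta> i = ((if a = i then 1 else 0) / softmax K \<theta> i - 1)
                      * (\<Sum>j\<in>{1..K}. softmax K \<theta> j * r j)"

definition pg_step :: "nat \<Rightarrow> (nat \<Rightarrow> real) \<Rightarrow> nat \<Rightarrow> real \<Rightarrow> (nat \<Rightarrow> real) \<Rightarrow> (nat \<Rightarrow> real)" where
  "pg_step K r a \<eta> \<theta> = (\<lambda>i. \<theta> i + \<eta> * (rhat K r a \<theta> i - bhat K r a \<theta> i))"

text \<open>theta_iter ... n is theta_{n+1} of the paper (theta_iter ... 0 = theta_1).\<close>
primrec theta_iter :: "nat \<Rightarrow> (nat \<Rightarrow> real) \<Rightarrow> nat \<Rightarrow> real \<Rightarrow> (nat \<Rightarrow> real) \<Rightarrow> nat \<Rightarrow> (nat \<Rightarrow> real)" where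
  "theta_iter K r a \<eta> \<theta>1 0 = \<theta>1"
| "theta_iter K r a \<eta> \<theta>1 (Suc n) = pg_step K r a \<eta> (theta_iter K r a \<eta> \<theta>1 n)"

end

theory Submission
  imports Defs
begin

definition Sx :: "nat \<Rightarrow> nat \<Rightarrow> (nat \<Rightarrow> real) \<Rightarrow> real" where
  "Sx K a \<theta> = (\<Sum>j\<in>{1..K}-{a}. exp (\<theta> j))"
definition Rx :: "nat \<Rightarrow> (nat \<Rightarrow> real) \<Rightarrow> nat \<Rightarrow> (nat \<Rightarrow> real) \<Rightarrow> real" where
  "Rx K r a \<theta> = (\<Sum>j\<in>{1..K}-{a}. exp (\<theta> j) * r j)"
definition ux :: "nat \<Rightarrow> nat \<Rightarrow> (nat \<Rightarrow> real) \<Rightarrow> real" where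
  "ux K a \<theta> = exp (\<theta> a) / Sx K a \<theta>"

lemma Sx_pos: "K \<ge> 2 \<Longrightarrow> Sx K a \<theta> > 0"
proof -
  assume K: "K \<ge> 2"
  have "{1..K}-{a} \<noteq> {}"
  proof
    assume "{1..K}-{a} = {}"
    then have "{1..K} \<subseteq> {a}" by blast
    then have "card {1..K} \<le> card {a}" by (intro card_mono) auto
    with K show False by simp
  qed
  then show ?thesis unfolding Sx_def by (intro sum_pos) auto
qed

lemma sum_split: "a \<in> {1..(K::nat)} \<Longrightarrow> (\<Sum>j\<in>{1..K}. f j) = f a + (\<Sum>j\<in>{1..K}-{a}. f j)"
  by (rule sum.remove) auto

lemma softmax_a: "a \<in> {1..K} \<Longrightarrow> softmax K \<theta> a = exp (\<theta> a) / (exp (\<theta> a) + Sx K a \<theta>)"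
  unfolding softmax_def Sx_def by (subst sum_split[of a K]) auto

lemma Bform:
  assumes "a \<in> {1..K}"
  shows "(\<Sum>j\<in>{1..K}. softmax K \<theta> j * r j) = (exp (\<theta> a) * r a + Rx K r a \<theta>) / (exp (\<theta> a) + Sx K a \<theta>)"
proof -
  have "(\<Sum>j\<in>{1..K}. softmax K \<theta> j * r j) = (\<Sum>j\<in>{1..K}. exp (\<theta> j) * r j) / (\<Sum>j\<in>{1..K}. exp (\<theta> j))"
    unfolding softmax_def by (simp add: sum_divide_distrib)
  also have "\<dots> = (exp (\<theta> a) * r a + Rx K r a \<theta>) / (exp (\<theta> a) + Sx K a \<theta>)"
    unfolding Rx_def Sx_def using assms by (subst (1 2) sum_split[of a K]) auto
  finally show ?thesis .
qed

lemma step_other: "j \<noteq> a \<Longrightarrow> pg_step K r a \<eta> \<theta> j = \<theta> j + \<eta> * (\<Sum>j\<in>{1..K}. softmax K \<theta> j * r j)"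
  unfolding pg_step_def rhat_def bhat_def by simp

lemma step_Sx: "Sx K a (pg_step K r a \<eta> \<theta>) = exp (\<eta> * (\<Sum>j\<in>{1..K}. softmax K \<theta> j * r j)) * Sx K a \<theta>"
proof -
  define B where "B = (\<Sum>j\<in>{1..K}. softmax K \<theta> j * r j)"
  have "Sx K a (pg_step K r a \<eta> \<theta>) = (\<Sum>j\<in>{1..K}-{a}. exp (\<eta> * B) * exp (\<theta> j))"
    unfolding Sx_def by (intro sum.cong) (auto simp: step_other B_def exp_add)
  also have "\<dots> = exp (\<eta> * B) * Sx K a \<theta>" by (simp only: Sx_def sum_distrib_left)
  finally show ?thesis unfolding B_def .
qed

lemma step_Rx: "Rx K r a (pg_step K r a \<eta> \<theta>) = exp (\<eta> * (\<Sum>j\<in>{1..K}. softmax K \<theta> j * r j)) * Rx K r a \<theta>"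
proof -
  define B where "B = (\<Sum>j\<in>{1..K}. softmax K \<theta> j * r j)"
  have "Rx K r a (pg_step K r a \<eta> \<theta>) = (\<Sum>j\<in>{1..K}-{a}. exp (\<eta> * B) * (exp (\<theta> j) * r j))"
    unfolding Rx_def by (intro sum.cong) (auto simp: step_other B_def exp_add)
  also have "\<dots> = exp (\<eta> * B) * Rx K r a \<theta>" by (simp only: Rx_def sum_distrib_left)
  finally show ?thesis unfolding B_def .
qed

lemma step_rb:
  assumes "K \<ge> 2"
  shows "Rx K r a (pg_step K r a \<eta> \<theta>) / Sx K a (pg_step K r a \<eta> \<theta>) = Rx K r a \<theta> / Sx K a \<theta>"
  using Sx_pos[OF assms] by (simp add: step_Rx step_Sx)

lemma step_u:
  assumes K: "K \<ge> 2" and a: "a \<in> {1..K}"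
  shows "ux K a (pg_step K r a \<eta> \<theta>) = ux K a \<theta> * exp (\<eta> * (r a - Rx K r a \<theta> / Sx K a \<theta>) / ux K a \<theta>)"
proof -
  define B where "B = (\<Sum>j\<in>{1..K}. softmax K \<theta> j * r j)"
  define p where "p = softmax K \<theta> a"
  define E where "E = exp (\<theta> a)"
  define S where "S = Sx K a \<theta>"
  define R where "R = Rx K r a \<theta>"
  have S: "S > 0" using Sx_pos[OF K] S_def by simp
  have E: "E > 0" unfolding E_def by simp
  have p: "p = E / (E + S)" unfolding p_def E_def S_def using softmax_a[OF a] by simp
  have B: "B = (E * r a + R) / (E + S)" unfolding B_def E_def R_def S_def by (rule Bform[OF a])
  have pa: "pg_step K r a \<eta> \<theta> a = \<theta> a + \<eta> * (r a / p - (1 / p - 1) * B)"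
    unfolding pg_step_def rhat_def bhat_def p_def B_def by simp
  have key: "r a / p - (1 / p - 1) * B = B + (r a - R / S) / (E / S)"
  proof -
    have ES: "E + S \<noteq> 0" using S E by simp
    have "1 / p - 1 = S / E" unfolding p using S E ES by (simp add: field_simps)
    moreover have "r a / p = r a * (E + S) / E" unfolding p using S E ES by (simp add: field_simps)
    ultimately have "r a / p - (1 / p - 1) * B = r a * (E + S) / E - S / E * ((E * r a + R) / (E + S))"
      unfolding B by simp
    also have "\<dots> = B + (r a - R / S) / (E / S)" unfolding B using S E ES
      by (simp add: divide_simps) (simp add: algebra_simps power2_eq_square)
    finally show ?thesis .
  qed
  have "ux K a (pg_step K r a \<eta> \<theta>) = exp (\<theta> a + \<eta> * (B + (r a - R / S) / (E / S))) / (exp (\<eta> * B) * S)"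
    unfolding ux_def using pa key by (simp add: step_Sx B_def S_def)
  also have "\<dots> = E / S * exp (\<eta> * ((r a - R / S) / (E / S)))"
  proof -
    have "exp (\<theta> a + \<eta> * (B + (r a - R / S) / (E / S))) = E * exp (\<eta> * B) * exp (\<eta> * ((r a - R / S) / (E / S)))"
      unfolding E_def by (simp add: distrib_left exp_add)
    then show ?thesis using S by simp
  qed
  finally show ?thesis unfolding ux_def E_def S_def R_def by simp
qed

lemma one_minus: "K \<ge> 2 \<Longrightarrow> a \<in> {1..K} \<Longrightarrow> 1 - softmax K \<theta> a = 1 / (1 + ux K a \<theta>)"
proof -
  assume K: "K \<ge> 2" and a: "a \<in> {1..K}"
  define E where "E = exp (\<theta> a)"
  define S where "S = Sx K a \<theta>"
  have S: "S > 0" using Sx_pos[OF K] S_def by simp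
  have E: "E > 0" unfolding E_def by simp
  have "1 - E / (E + S) = 1 / (1 + E / S)" using S E by (simp add: field_simps)
  then show ?thesis unfolding softmax_a[OF a] ux_def E_def S_def .
qed

lemma exp_bound: "(x::real) \<ge> 0 \<Longrightarrow> exp x \<le> 1 + x * exp x"
proof -
  assume x: "x \<ge> 0"
  have "exp (-x) \<ge> 1 - x" using exp_ge_add_one_self[of "-x"] by simp
  then have "exp (-x) * exp x \<ge> (1 - x) * exp x" by (simp add: mult_right_mono)
  then show ?thesis by (simp add: exp_minus field_simps)
qed

theorem lemma8:
  fixes K :: nat and r :: "nat \<Rightarrow> real" and a :: nat
    and \<theta>1 :: "nat \<Rightarrow> real" and \<eta> :: real
  assumes "K \<ge> 2"
    and "\<And>i. i \<in> {1..K} \<Longrightarrow> 0 < r i \<and> r i \<le> 1"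
    and "a \<in> {1..K}"
    and "\<eta> > 0"
  shows "\<exists>C>0. \<forall>\<^sub>F t in sequentially.
           1 - softmax K (theta_iter K r a \<eta> \<theta>1 (t - 1)) a \<ge> C / real t"
proof -
  note K = assms(1) and a = assms(3)
  define th where "th = theta_iter K r a \<eta> \<theta>1"
  define u where "u n = ux K a (th n)" for n
  define R where "R = Rx K r a \<theta>1 / Sx K a \<theta>1"
  define c where "c = \<eta> * (r a - R)"
  have upos: "u n > 0" for n unfolding u_def ux_def using Sx_pos[OF K] by simp
  have rb: "Rx K r a (th n) / Sx K a (th n) = R" for n
    by (induction n) (simp_all add: th_def R_def step_rb[OF K])
  have urec: "u (Suc n) = u n * exp (c / u n)" for n
    unfolding u_def c_def using step_u[OF K a, of r \<eta> "th n"] rb[of n] by (simp add: th_def)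
  define D where "D = \<bar>c\<bar> * exp (\<bar>c\<bar> / u 0)"
  have D: "D \<ge> 0" unfolding D_def by simp
  have ub: "u n \<le> u 0 + real n * D \<and> (c > 0 \<longrightarrow> u n \<ge> u 0)" for n
  proof (induction n)
    case 0 then show ?case by simp
  next
    case (Suc n)
    show ?case
    proof (cases "c > 0")
      case True
      with Suc have ge: "u n \<ge> u 0" by simp
      have cu: "c / u n \<le> \<bar>c\<bar> / u 0"
        using True ge upos[of 0] upos[of n] by (simp add: frac_le)
      have "exp (c / u n) \<le> 1 + c / u n * exp (c / u n)"
        using True upos[of n] by (intro exp_bound) simp
      also have "\<dots> \<le> 1 + c / u n * exp (\<bar>c\<bar> / u 0)"
        using cu True upos[of n] by (intro add_left_mono mult_left_mono) auto
      finally have "u (Suc n) \<le> u n * (1 + c / u n * exp (\<bar>c\<bar> / u 0))"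
        unfolding urec using upos[of n] by (simp add: mult_left_mono)
      also have "\<dots> = u n + D" unfolding D_def using upos[of n] True by (simp add: field_simps)
      finally have 1: "u (Suc n) \<le> u 0 + real (Suc n) * D" using Suc by (simp add: field_simps)
      have "exp (c / u n) \<ge> 1" using True upos[of n] by simp
      then have "u (Suc n) \<ge> u n" unfolding urec using upos[of n]
        by (metis mult.right_neutral mult_left_mono less_le)
      with ge 1 show ?thesis by simp
    next
      case False
      have "exp (c / u n) \<le> 1" using False upos[of n] by (simp add: divide_nonpos_pos)
      then have "u (Suc n) \<le> u n" unfolding urec using upos[of n]
        by (metis mult.right_neutral mult_left_mono less_le)
      then have "u (Suc n) \<le> u 0 + real n * D + D" using Suc D by linarith
      then show ?thesis using False by (simp add: algebra_simps)
    qed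
  qed
  define C where "C = 1 / (1 + u 0 + D)"
  have Cpos: "C > 0" unfolding C_def using upos[of 0] D by simp
  have "\<forall>\<^sub>F t in sequentially. 1 - softmax K (th (t - 1)) a \<ge> C / real t"
  proof (rule eventually_sequentiallyI[of 1])
    fix t :: nat assume t: "t \<ge> 1"
    define n where "n = t - 1"
    have tn: "real t = real n + 1" using t n_def by simp
    have "u n \<le> u 0 + real n * D" using ub by simp
    then have le: "1 + u n \<le> (1 + u 0 + D) * real t"
    proof -
      have "(1 + u 0 + D) * (real n + 1) = 1 + u 0 + D + real n + real n * u 0 + real n * D"
        by (simp add: algebra_simps)
      moreover have "0 \<le> real n * u 0" using upos[of 0] by simp
      ultimately show ?thesis unfolding tn using \<open>u n \<le> u 0 + real n * D\<close> D by linarith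
    qed
    have "C / real t = 1 / ((1 + u 0 + D) * real t)" unfolding C_def by simp
    also have "\<dots> \<le> 1 / (1 + u n)"
      using le upos[of n] by (intro divide_left_mono) auto
    also have "\<dots> = 1 - softmax K (th n) a" unfolding u_def using one_minus[OF K a] by simp
    finally show "1 - softmax K (th (t - 1)) a \<ge> C / real t" unfolding n_def .
  qed
  then show ?thesis using Cpos unfolding th_def by blast
qed

end
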